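(* Let $\Lambda=K\mathcal{Q}/I$ be a finite-dimensional algebra over a field $K$ as in the context, let $A\geqslant1$, let $\tilde{\Lambda}=\tilde{\Lambda}_A$ be its stretched algebra and $\varepsilon=\sum_{v\in\mathcal{Q}_0}v\in\tilde{\Lambda}$. For an arrow $\alpha$ of $\mathcal{Q}$ with new vertices $w_1,\dots,w_{A-1}$, let $$X_\alpha=\big(\tilde{\Lambda}w_1\tilde{\Lambda}+\cdots+\tilde{\Lambda}w_{A-1}\tilde{\Lambda}+\tilde{\Lambda}\varepsilon\tilde{\Lambda}\big)/\tilde{\Lambda}\varepsilon\tilde{\Lambda}.$$ Then $\dim_KX_\alpha=A(A-1)/2$, and $\dim_K\tilde{\Lambda}/\langle\varepsilon\rangle=m_1A(A-1)/2$, where $m_1$ is the number of arrows of $\mathcal{Q}$ and $\langle\varepsilon\rangle=\tilde{\Lambda}\varepsilon\tilde{\Lambda}$.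
   Context: Conventions: $\mathcal{Q}$ is a finite quiver with vertex set $\mathcal{Q}_0$; $\mathfrak{o}(\alpha)$, $\mathfrak{t}(\alpha)$ denote start and end of an arrow; paths are written left to right. An element $x\in K\mathcal{Q}$ is uniform if $x=vx=xv'$ for vertices $v,v'$. $\Lambda=K\mathcal{Q}/I$ is finite-dimensional with $I$ an admissible ideal generated by a minimal set $\{g^2_1,\dots,g^2_m\}$ of uniform elements. Stretched algebra: for $A\geqslant1$, the quiver $\tilde{\mathcal{Q}}_A$ has all vertices of $\mathcal{Q}$ plus, for each arrow $\alpha$ of $\mathcal{Q}$, new vertices $w_1,\dots,w_{A-1}$; each arrow $\alpha$ is replaced by arrows $\alpha_1,\dots,\alpha_A$ with $\mathfrak{o}(\alpha_1)=\mathfrak{o}(\alpha)$, $\mathfrak{t}(\alpha_j)=\mathfrak{o}(\alpha_{j+1})=w_j$ ($1\le j\le A-1$), $\mathfrak{t}(\alpha_A)=\mathfrak{t}(\alpha)$, and the only arrows incident with $w_j$ are $\alpha_j,\alpha_{j+1}$. $\theta^*:K\mathcal{Q}\to K\tilde{\mathcal{Q}}_A$ is the algebra homomorphism fixing vertices and sending $\alpha\mapsto\alpha_1\cdots\alpha_A$; $\tilde{I}_A$ is the ideal generated by $\theta^*(g^2_1),\dots,\theta^*(g^2_m)$; $\tilde{\Lambda}_A=K\tilde{\mathcal{Q}}_A/\tilde{I}_A$. *)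

theory Defs
  imports Main
begin

text \<open>Finite quivers given by a vertex set, an arrow set, start and end maps.
  A path is a pair (v, as) of a start vertex and a list of arrows, written
  left to right; (v, []) is the trivial path at v.\<close>

record ('v, 'e) quiver =
  verts :: "'v set"
  arrs  :: "'e set"
  src   :: "'e \<Rightarrow> 'v"
  tgt   :: "'e \<Rightarrow> 'v"

type_synonym ('v, 'e) path = "'v \<times> 'e list"

definition finite_quiver :: "('v, 'e) quiver \<Rightarrow> bool" where
  "finite_quiver Q \<longleftrightarrow> finite (verts Q) \<and> finite (arrs Q) \<and>
     (\<forall>a\<in>arrs Q. src Q a \<in> verts Q \<and> tgt Q a \<in> verts Q)"

fun valid_path :: "('v, 'e) quiver \<Rightarrow> ('v, 'e) path \<Rightarrow> bool" where
  "valid_path Q (v, as) \<longleftrightarrow> v \<in> verts Q \<and> set as \<subseteq> arrs Q \<and>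
     (as \<noteq> [] \<longrightarrow> src Q (hd as) = v) \<and>
     (\<forall>i. Suc i < length as \<longrightarrow> tgt Q (as ! i) = src Q (as ! Suc i))"

fun end_vertex :: "('v, 'e) quiver \<Rightarrow> ('v, 'e) path \<Rightarrow> 'v" where
  "end_vertex Q (v, as) = (if as = [] then v else tgt Q (last as))"

fun path_mult :: "('v, 'e) quiver \<Rightarrow> ('v, 'e) path \<Rightarrow> ('v, 'e) path \<Rightarrow> ('v, 'e) path option" where
  "path_mult Q (v, as) (w, bs) = (if end_vertex Q (v, as) = w then Some (v, as @ bs) else None)"

text \<open>Elements of the path algebra KQ: finitely supported K-valued functions
  on valid paths (coefficient of each path).\<close>

definition supp :: "('p \<Rightarrow> 'k::zero) \<Rightarrow> 'p set" where
  "supp x = {p. x p \<noteq> 0}"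

definition pa_carrier :: "('v, 'e) quiver \<Rightarrow> (('v, 'e) path \<Rightarrow> 'k::zero) set" where
  "pa_carrier Q = {x. finite (supp x) \<and> (\<forall>p. x p \<noteq> 0 \<longrightarrow> valid_path Q p)}"

definition pmult :: "('v, 'e) quiver \<Rightarrow> (('v, 'e) path \<Rightarrow> 'k::comm_ring_1)
    \<Rightarrow> (('v, 'e) path \<Rightarrow> 'k) \<Rightarrow> (('v, 'e) path \<Rightarrow> 'k)" where
  "pmult Q x y = (\<lambda>r. \<Sum>p\<in>supp x. \<Sum>q\<in>supp y.
      if path_mult Q p q = Some r then x p * y q else 0)"

definition padd :: "('p \<Rightarrow> 'k::plus) \<Rightarrow> ('p \<Rightarrow> 'k) \<Rightarrow> ('p \<Rightarrow> 'k)" where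
  "padd x y = (\<lambda>p. x p + y p)"

definition pth :: "('v, 'e) path \<Rightarrow> (('v, 'e) path \<Rightarrow> 'k::{zero,one})" where
  "pth p = (\<lambda>q. if q = p then 1 else 0)"

definition vtx :: "'v \<Rightarrow> (('v, 'e) path \<Rightarrow> 'k::{zero,one})" where
  "vtx v = pth (v, [])"

inductive_set ideal_gen :: "('v, 'e) quiver \<Rightarrow> (('v, 'e) path \<Rightarrow> 'k::comm_ring_1) set
    \<Rightarrow> (('v, 'e) path \<Rightarrow> 'k) set" for Q G where
  zero: "(\<lambda>_. 0) \<in> ideal_gen Q G"
| gen: "g \<in> G \<Longrightarrow> a \<in> pa_carrier Q \<Longrightarrow> b \<in> pa_carrier Q \<Longrightarrow>
        pmult Q (pmult Q a g) b \<in> ideal_gen Q G"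
| add: "x \<in> ideal_gen Q G \<Longrightarrow> y \<in> ideal_gen Q G \<Longrightarrow> padd x y \<in> ideal_gen Q G"

definition arrow_ideal_pow :: "('v, 'e) quiver \<Rightarrow> nat \<Rightarrow> (('v, 'e) path \<Rightarrow> 'k::comm_ring_1) set" where
  "arrow_ideal_pow Q n = ideal_gen Q {pth p | p. valid_path Q p \<and> length (snd p) = n}"

definition admissible :: "('v, 'e) quiver \<Rightarrow> (('v, 'e) path \<Rightarrow> 'k::comm_ring_1) set \<Rightarrow> bool" where
  "admissible Q I \<longleftrightarrow> (\<exists>N\<ge>2. arrow_ideal_pow Q N \<subseteq> I \<and> I \<subseteq> arrow_ideal_pow Q 2)"

definition uniform :: "('v, 'e) quiver \<Rightarrow> (('v, 'e) path \<Rightarrow> 'k::comm_ring_1) \<Rightarrow> bool" where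
  "uniform Q x \<longleftrightarrow> (\<exists>v\<in>verts Q. \<exists>v'\<in>verts Q. x = pmult Q (vtx v) x \<and> x = pmult Q x (vtx v'))"

text \<open>K-linear combinations and dimension of a quotient space U/W (W \<subseteq> U subspaces
  of KQ): U/W has dimension d iff there are d elements of U whose classes form a
  basis of U/W.\<close>
definition lin_comb :: "(nat \<Rightarrow> 'k::comm_ring_1) \<Rightarrow> ('p \<Rightarrow> 'k) list \<Rightarrow> ('p \<Rightarrow> 'k)" where
  "lin_comb c xs = (\<lambda>p. \<Sum>i<length xs. c i * (xs ! i) p)"

definition has_qdim :: "('p \<Rightarrow> 'k::field) set \<Rightarrow> ('p \<Rightarrow> 'k) set \<Rightarrow> nat \<Rightarrow> bool" where
  "has_qdim U W d \<longleftrightarrow> (\<exists>xs. length xs = d \<and> set xs \<subseteq> U \<and>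
      (\<forall>c. lin_comb c xs \<in> W \<longrightarrow> (\<forall>i<d. c i = 0)) \<and>
      (\<forall>u\<in>U. \<exists>c w. w \<in> W \<and> u = padd (lin_comb c xs) w))"

text \<open>The stretched quiver: old vertices Inl v, new vertices w_j of arrow \<alpha> are
  Inr (\<alpha>, j) for 1 \<le> j \<le> A-1; the new arrows \<alpha>_j are (\<alpha>, j), 1 \<le> j \<le> A.\<close>
definition stretch :: "('v, 'e) quiver \<Rightarrow> nat \<Rightarrow> ('v + 'e \<times> nat, 'e \<times> nat) quiver" where
  "stretch Q A = \<lparr> verts = Inl ` verts Q \<union> {Inr (\<alpha>, j) | \<alpha> j. \<alpha> \<in> arrs Q \<and> 1 \<le> j \<and> j \<le> A - 1},
     arrs = {(\<alpha>, j) | \<alpha> j. \<alpha> \<in> arrs Q \<and> 1 \<le> j \<and> j \<le> A},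
     src = (\<lambda>(\<alpha>, j). if j = 1 then Inl (src Q \<alpha>) else Inr (\<alpha>, j - 1)),
     tgt = (\<lambda>(\<alpha>, j). if j = A then Inl (tgt Q \<alpha>) else Inr (\<alpha>, j)) \<rparr>"

fun theta_path :: "nat \<Rightarrow> ('v, 'e) path \<Rightarrow> ('v + 'e \<times> nat, 'e \<times> nat) path" where
  "theta_path A (v, as) = (Inl v, concat (map (\<lambda>\<alpha>. map (\<lambda>j. (\<alpha>, j)) [1..<A + 1]) as))"

text \<open>theta*: the algebra homomorphism KQ \<rightarrow> KQ~ fixing vertices, \<alpha> \<mapsto> \<alpha>_1...\<alpha>_A
  (extended linearly from paths).\<close>
definition theta :: "nat \<Rightarrow> (('v, 'e) path \<Rightarrow> 'k::comm_ring_1)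
    \<Rightarrow> (('v + 'e \<times> nat, 'e \<times> nat) path \<Rightarrow> 'k)" where
  "theta A x = (\<lambda>q. \<Sum>p\<in>supp x. if theta_path A p = q then x p else 0)"

definition eps :: "('v, 'e) quiver \<Rightarrow> (('v + 'e \<times> nat, 'e \<times> nat) path \<Rightarrow> 'k::comm_ring_1)" where
  "eps Q = (\<lambda>p. \<Sum>v\<in>verts Q. vtx (Inl v) p)"

end

theory Submission
  imports Defs
begin


definition sc :: "'p \<Rightarrow> 'k::zero \<Rightarrow> ('p \<Rightarrow> 'k)" where
  "sc p c = (\<lambda>r. if r = p then c else 0)"

lemma sc_apply: "sc p c r = (if r = p then c else 0)"
  by (simp add: sc_def)

definition pverts :: "('v, 'e) quiver \<Rightarrow> ('v, 'e) path \<Rightarrow> 'v set" where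
  "pverts Q p = insert (fst p) (tgt Q ` set (snd p))"

lemma pmult_nonzero:
  assumes "pmult Q x y r \<noteq> (0::'k::comm_ring_1)"
  shows "\<exists>p q. x p \<noteq> 0 \<and> y q \<noteq> 0 \<and> path_mult Q p q = Some r"
proof -
  have "(\<Sum>p\<in>supp x. \<Sum>q\<in>supp y. if path_mult Q p q = Some r then x p * y q else 0) \<noteq> 0"
    using assms by (simp add: pmult_def)
  then obtain p where p: "p \<in> supp x" and
    "(\<Sum>q\<in>supp y. if path_mult Q p q = Some r then x p * y q else 0) \<noteq> 0"
    by (rule sum.not_neutral_contains_not_neutral)
  from this(2) obtain q where q: "q \<in> supp y" and "(if path_mult Q p q = Some r then x p * y q else 0) \<noteq> 0"
    by (rule sum.not_neutral_contains_not_neutral)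
  then have "path_mult Q p q = Some r" "x p * y q \<noteq> 0" by (auto split: if_splits)
  moreover have "x p \<noteq> 0" "y q \<noteq> 0" using calculation(2) by auto
  ultimately show ?thesis by blast
qed

lemma path_mult_Some:
  assumes "path_mult Q p q = Some r"
  shows "r = (fst p, snd p @ snd q) \<and> end_vertex Q p = fst q"
  using assms by (cases p; cases q) (auto split: if_splits)

lemma pverts_mult:
  assumes "path_mult Q p q = Some r"
  shows "pverts Q p \<subseteq> pverts Q r \<and> pverts Q q \<subseteq> pverts Q r"
proof -
  obtain v as w bs where pq: "p = (v, as)" "q = (w, bs)" by (cases p; cases q)
  with assms have r: "r = (v, as @ bs)" and w: "w = end_vertex Q (v, as)"
    by (auto split: if_splits)
  have "w \<in> pverts Q r" using w r by (auto simp: pverts_def)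
  then show ?thesis using pq r by (auto simp: pverts_def)
qed

lemma ideal_support:
  assumes gens: "\<forall>g\<in>Gs. \<forall>r. g r \<noteq> 0 \<longrightarrow> pverts Q r \<inter> S \<noteq> {}"
    and x: "x \<in> ideal_gen Q Gs"
  shows "x r \<noteq> (0::'k::comm_ring_1) \<Longrightarrow> pverts Q r \<inter> S \<noteq> {}"
  using x
proof (induction arbitrary: r)
  case zero
  then show ?case by simp
next
  case (gen g a b)
  from pmult_nonzero[OF gen(4)] obtain p q where
    p: "pmult Q a g p \<noteq> 0" and pq: "path_mult Q p q = Some r" by blast
  from pmult_nonzero[OF p] obtain p' q' where
    q': "g q' \<noteq> 0" and pq': "path_mult Q p' q' = Some p" by blast
  have "pverts Q q' \<inter> S \<noteq> {}" using gens gen(1) q' by blast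
  moreover have "pverts Q q' \<subseteq> pverts Q r" using pverts_mult[OF pq] pverts_mult[OF pq'] by blast
  ultimately show ?case by blast
next
  case (add x y)
  then have "x r \<noteq> 0 \<or> y r \<noteq> 0" by (auto simp: padd_def)
  then show ?case using add.IH by blast
qed

lemma supp_sc: "supp (sc p c) = (if c = 0 then {} else {p})"
  by (auto simp: supp_def sc_apply)

lemma pmult_sc_left:
  "pmult Q (sc p c) y r = (\<Sum>q\<in>supp y. if path_mult Q p q = Some r then c * y q else (0::'k::comm_ring_1))"
proof (cases "c = 0")
  case True
  have "pmult Q (sc p c) y r = 0" unfolding pmult_def supp_sc using True by simp
  moreover have "(\<Sum>q\<in>supp y. if path_mult Q p q = Some r then c * y q else (0::'k)) = 0"
    by (rule sum.neutral) (simp add: True)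
  ultimately show ?thesis by simp
next
  case False
  then show ?thesis unfolding pmult_def supp_sc by (simp add: sc_apply cong: if_cong)
qed

lemma pmult_sc_sc:
  "pmult Q (sc p c) (sc q d) = (case path_mult Q p q of None \<Rightarrow> (\<lambda>_. 0) | Some r \<Rightarrow> sc r (c * (d::'k::comm_ring_1)))"
proof (rule ext)
  fix r
  show "pmult Q (sc p c) (sc q d) r = (case path_mult Q p q of None \<Rightarrow> (\<lambda>_. 0) | Some r \<Rightarrow> sc r (c * d)) r"
  proof (cases "d = 0")
    case True
    then show ?thesis unfolding pmult_sc_left supp_sc by (simp add: sc_apply cong: if_cong split: option.split)
  next
    case False
    then show ?thesis unfolding pmult_sc_left supp_sc by (auto simp add: sc_apply cong: if_cong split: option.split)
  qed
qed

lemma valid_append: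
  assumes "valid_path Q (v, as)" "valid_path Q (w, bs)" "end_vertex Q (v, as) = w"
  shows "valid_path Q (v, as @ bs)"
proof -
  have chain: "tgt Q ((as @ bs) ! i) = src Q ((as @ bs) ! Suc i)" if i: "Suc i < length (as @ bs)" for i
  proof -
    consider "Suc i < length as" | "Suc i = length as" | "i \<ge> length as" by linarith
    then show ?thesis
    proof cases
      case 1 then show ?thesis using assms(1) by (simp add: nth_append)
    next
      case 2
      then have "as \<noteq> []" by auto
      moreover have "length as - 1 = i" using 2 by simp
      ultimately have "last as = as ! i" by (simp add: last_conv_nth)
      moreover have "bs \<noteq> []" using i 2 by auto
      ultimately show ?thesis using assms 2 by (auto simp: nth_append hd_conv_nth)
    next
      case 3
      then have "Suc (i - length as) < length bs" using i by auto
      then show ?thesis using assms(2) 3 by (auto simp: nth_append Suc_diff_le)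
    qed
  qed
  show ?thesis using assms chain by (auto simp: hd_append split: if_splits)
qed

declare valid_path.simps[simp del]

lemma pmult_carrier:
  fixes x y :: "('v, 'e) path \<Rightarrow> 'k::comm_ring_1"
  assumes "x \<in> pa_carrier Q" "y \<in> pa_carrier Q"
  shows "pmult Q x y \<in> pa_carrier Q"
proof -
  have "supp (pmult Q x y) \<subseteq> (\<lambda>(p, q). (fst p, snd p @ snd q)) ` (supp x \<times> supp y)"
  proof
    fix r assume "r \<in> supp (pmult Q x y)"
    then obtain p q where "x p \<noteq> 0" "y q \<noteq> 0" "path_mult Q p q = Some r"
      using pmult_nonzero unfolding supp_def by blast
    then show "r \<in> (\<lambda>(p, q). (fst p, snd p @ snd q)) ` (supp x \<times> supp y)"
      using path_mult_Some by (fastforce simp: supp_def)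
  qed
  moreover have "finite (supp x)" "finite (supp y)" using assms by (auto simp: pa_carrier_def)
  ultimately have "finite (supp (pmult Q x y))" by (meson finite_SigmaI finite_imageI finite_subset)
  moreover have "valid_path Q r" if nz: "pmult Q x y r \<noteq> 0" for r
  proof -
    obtain p q where pq: "x p \<noteq> 0" "y q \<noteq> 0" "path_mult Q p q = Some r"
      using pmult_nonzero[OF nz] by blast
    then have "valid_path Q p" "valid_path Q q" using assms unfolding pa_carrier_def by blast+
    then show ?thesis using valid_append[of Q "fst p" "snd p" "fst q" "snd q"] path_mult_Some[OF pq(3)]
      by simp
  qed
  ultimately show ?thesis by (auto simp: pa_carrier_def)
qed




lemma st_tgt: "tgt (stretch Q A) (a, j) = (if j = A then Inl (tgt Q a) else Inr (a, j))"
  by (simp add: stretch_def)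
lemma st_src: "src (stretch Q A) (a, j) = (if j = 1 then Inl (src Q a) else Inr (a, j - 1))"
  by (simp add: stretch_def)
lemma st_arrs: "x \<in> arrs (stretch Q A) \<longleftrightarrow> (\<exists>a j. x = (a, j) \<and> a \<in> arrs Q \<and> 1 \<le> j \<and> j \<le> A)"
  by (auto simp: stretch_def)
lemma st_arrs2: "(a, j) \<in> arrs (stretch Q A) \<longleftrightarrow> a \<in> arrs Q \<and> 1 \<le> j \<and> j \<le> A"
  by (auto simp: stretch_def)
lemma st_verts_Inl: "Inl v \<in> verts (stretch Q A) \<longleftrightarrow> v \<in> verts Q"
  by (auto simp: stretch_def)
lemma st_verts_Inr: "Inr (a, j) \<in> verts (stretch Q A) \<longleftrightarrow> a \<in> arrs Q \<and> 1 \<le> j \<and> j \<le> A - 1"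
  by (auto simp: stretch_def)

lemma st_tgt_verts:
  assumes fq: "finite_quiver Q" and x: "x \<in> arrs (stretch Q A)"
  shows "tgt (stretch Q A) x \<in> verts (stretch Q A)"
proof -
  obtain a j where "x = (a, j)" "a \<in> arrs Q" "1 \<le> j" "j \<le> A" using x by (auto simp: st_arrs)
  then show ?thesis using fq by (auto simp: st_tgt st_verts_Inl st_verts_Inr finite_quiver_def)
qed

lemma pverts_valid:
  assumes tv: "\<forall>a\<in>arrs Q. tgt Q a \<in> verts Q" and v: "valid_path Q p"
  shows "pverts Q p \<subseteq> verts Q"
proof -
  obtain w as where p: "p = (w, as)" by (cases p)
  then show ?thesis using v tv by (auto simp: pverts_def valid_path.simps)
qed

lemma path_split:
  assumes tv: "\<forall>a\<in>arrs Q. tgt Q a \<in> verts Q" and v: "valid_path Q p" and x: "x \<in> pverts Q p"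
  shows "\<exists>p1 p2. valid_path Q p1 \<and> valid_path Q p2 \<and> path_mult Q p1 p2 = Some p \<and> end_vertex Q p1 = x"
proof -
  obtain w as where p: "p = (w, as)" by (cases p)
  have vw: "w \<in> verts Q" and sa: "set as \<subseteq> arrs Q" and hd: "as \<noteq> [] \<longrightarrow> src Q (hd as) = w"
    and ch: "\<forall>i. Suc i < length as \<longrightarrow> tgt Q (as ! i) = src Q (as ! Suc i)"
    using v p by (auto simp: valid_path.simps)
  show ?thesis
  proof (cases "x = w")
    case True
    have "valid_path Q (w, [])" using vw by (simp add: valid_path.simps)
    moreover have "path_mult Q (w, []) p = Some p" using p by simp
    moreover have "end_vertex Q (w, []) = x" using True by simp
    ultimately show ?thesis using v by blast
  next
    case False
    then obtain k where k: "k < length as" and xk: "x = tgt Q (as ! k)"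
      using x p by (auto simp: pverts_def in_set_conv_nth)
    define p1 where "p1 = (w, take (Suc k) as)"
    define p2 where "p2 = (x, drop (Suc k) as)"
    have tk: "take (Suc k) as = take k as @ [as ! k]" using k by (simp add: take_Suc_conv_app_nth)
    have e1: "end_vertex Q p1 = x"
      unfolding p1_def tk end_vertex.simps xk by simp
    have "valid_path Q p1"
      unfolding p1_def valid_path.simps
    proof (intro conjI allI impI)
      show "w \<in> verts Q" by (rule vw)
      show "set (take (Suc k) as) \<subseteq> arrs Q" using subset_trans[OF set_take_subset sa] .
      show "src Q (hd (take (Suc k) as)) = w" if "take (Suc k) as \<noteq> []"
        using hd that by (simp add: hd_take)
      fix i assume "Suc i < length (take (Suc k) as)"
      then show "tgt Q (take (Suc k) as ! i) = src Q (take (Suc k) as ! Suc i)"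
        using ch by simp
    qed
    moreover have "as ! k \<in> arrs Q" using nth_mem[OF k] sa by blast
    then have xv: "x \<in> verts Q" unfolding xk using tv by blast
    have "valid_path Q p2"
      unfolding p2_def valid_path.simps
    proof (intro conjI allI impI)
      show "x \<in> verts Q" by (rule xv)
      show "set (drop (Suc k) as) \<subseteq> arrs Q" using subset_trans[OF set_drop_subset sa] .
      show "src Q (hd (drop (Suc k) as)) = x" if "drop (Suc k) as \<noteq> []"
      proof -
        have "Suc k < length as" using that by simp
        then show ?thesis using ch xk by (simp add: hd_drop_conv_nth)
      qed
      fix i assume "Suc i < length (drop (Suc k) as)"
      then show "tgt Q (drop (Suc k) as ! i) = src Q (drop (Suc k) as ! Suc i)"
        using ch[rule_format, of "Suc k + i"] by simp
    qed
    moreover have "path_mult Q p1 p2 = Some p"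
      using e1 p by (simp add: p1_def p2_def)
    ultimately show ?thesis using e1 by blast
  qed
qed

lemma sc_carrier: "valid_path Q p \<Longrightarrow> sc p c \<in> pa_carrier Q"
  by (auto simp: pa_carrier_def supp_sc sc_apply)

lemma vtx_sc: "vtx v = sc (v, []) 1"
  by (auto simp: vtx_def pth_def sc_def)
lemma pth_sc: "pth p = sc p 1"
  by (auto simp: pth_def sc_def)

lemma eps_apply:
  assumes fin: "finite (verts Q)"
  shows "eps Q r = (if \<exists>v\<in>verts Q. r = (Inl v, []) then 1 else (0::'k::comm_ring_1))"
proof (cases "\<exists>v\<in>verts Q. r = (Inl v, [])")
  case True
  then obtain u where u: "u \<in> verts Q" "r = (Inl u, [])" by blast
  have "eps Q r = (\<Sum>v\<in>verts Q. if u = v then 1 else (0::'k))"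
    unfolding eps_def by (rule sum.cong) (auto simp: vtx_def pth_def u)
  also have "\<dots> = 1" using fin u by simp
  finally show ?thesis using True by simp
next
  case False
  have "eps Q r = (\<Sum>v\<in>verts Q. (0::'k))"
    unfolding eps_def by (rule sum.cong) (use False in \<open>auto simp: vtx_def pth_def\<close>)
  then show ?thesis using False by simp
qed

definition ivs :: "('v, 'e) quiver \<Rightarrow> ('v + 'e \<times> nat, 'e \<times> nat) path set" where
  "ivs Q = (\<lambda>v. (Inl v, [])) ` verts Q"

lemma supp_eps:
  assumes fin: "finite (verts Q)"
  shows "supp (eps Q :: _ \<Rightarrow> 'k::field) = ivs Q"
  using fin by (auto simp: supp_def eps_apply ivs_def)

lemma pmult_sc_eps:
  assumes fin: "finite (verts Q)" and e: "end_vertex (stretch Q A) p = Inl u" and u: "u \<in> verts Q"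
  shows "pmult (stretch Q A) (sc p c) (eps Q) = sc p (c::'k::field)"
proof (rule ext)
  fix r
  obtain w as where p: "p = (w, as)" by (cases p)
  have "pmult (stretch Q A) (sc p c) (eps Q) r =
     (\<Sum>q\<in>ivs Q. if path_mult (stretch Q A) p q = Some r then c * eps Q q else 0)"
    unfolding pmult_sc_left supp_eps[OF fin] ..
  also have "\<dots> = (\<Sum>q\<in>ivs Q. if (Inl u, []) = q then sc p c r else 0)"
  proof (rule sum.cong[OF refl])
    fix q assume "q \<in> ivs Q"
    then obtain v where v: "v \<in> verts Q" "q = (Inl v, [])" by (auto simp: ivs_def)
    then have "eps Q q = (1::'k)" using fin by (auto simp: eps_apply)
    then show "(if path_mult (stretch Q A) p q = Some r then c * eps Q q else 0) =
        (if (Inl u, []) = q then sc p c r else 0)"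
      using e v p by (auto simp: sc_apply)
  qed
  also have "\<dots> = sc p c r" using fin u by (simp add: ivs_def)
  finally show "pmult (stretch Q A) (sc p c) (eps Q) r = sc p c r" .
qed




lemma ideal_from_sc:
  fixes x :: "'p \<Rightarrow> 'k::comm_ring_1"
  assumes z: "(\<lambda>_. 0) \<in> J" and ad: "\<And>x y. x \<in> J \<Longrightarrow> y \<in> J \<Longrightarrow> padd x y \<in> J"
    and scJ: "\<And>p c. P p \<Longrightarrow> sc p c \<in> J"
    and fin: "finite (supp x)" and good: "\<And>r. x r \<noteq> (0::'k::comm_ring_1) \<Longrightarrow> P r"
  shows "x \<in> J"
proof -
  have "\<forall>x::'p \<Rightarrow> 'k. supp x \<subseteq> F \<longrightarrow> (\<forall>r. x r \<noteq> (0::'k) \<longrightarrow> P r) \<longrightarrow> x \<in> J" if "finite F" for F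
    using that
  proof (induction F rule: finite_induct)
    case empty
    show ?case
    proof (intro allI impI)
      fix x :: "'p \<Rightarrow> 'k" assume "supp x \<subseteq> {}"
      then have "x = (\<lambda>_. 0)" by (auto simp: supp_def)
      then show "x \<in> J" using z by simp
    qed
  next
    case (insert p F)
    show ?case
    proof (intro allI impI)
      fix x :: "'p \<Rightarrow> 'k" assume s: "supp x \<subseteq> insert p F" and g: "\<forall>r. x r \<noteq> 0 \<longrightarrow> P r"
      define x' where "x' = x(p := 0)"
      have "supp x' \<subseteq> F" using s by (auto simp: supp_def x'_def)
      moreover have "\<forall>r. x' r \<noteq> 0 \<longrightarrow> P r" using g by (auto simp: x'_def)
      ultimately have x'J: "x' \<in> J" using insert.IH by blast
      have scJ': "sc p (x p) \<in> J"
      proof (cases "x p = 0")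
        case True
        then have "sc p (x p) = (\<lambda>_. 0)" by (auto simp: sc_def)
        then show ?thesis using z by simp
      next
        case False
        then show ?thesis using g scJ by blast
      qed
      have "x = padd x' (sc p (x p))" by (auto simp: padd_def x'_def sc_def)
      then show "x \<in> J" using ad[OF x'J scJ'] by simp
    qed
  qed
  then show ?thesis using fin good by blast
qed

abbreviation JJ :: "('v, 'e) quiver \<Rightarrow> nat \<Rightarrow> (('v, 'e) path \<Rightarrow> 'k::field) set
   \<Rightarrow> (('v + 'e \<times> nat, 'e \<times> nat) path \<Rightarrow> 'k) set" where
  "JJ Q A G \<equiv> ideal_gen (stretch Q A) (theta A ` G \<union> {eps Q})"

lemma sc_in_J:
  assumes fq: "finite_quiver Q" and v: "valid_path (stretch Q A) p"
    and i: "pverts (stretch Q A) p \<inter> range Inl \<noteq> {}"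
  shows "sc p c \<in> JJ Q A G"
proof -
  have tv: "\<forall>a\<in>arrs (stretch Q A). tgt (stretch Q A) a \<in> verts (stretch Q A)"
    using st_tgt_verts[OF fq] by blast
  obtain u where u: "Inl u \<in> pverts (stretch Q A) p" using i by blast
  obtain p1 p2 where p12: "valid_path (stretch Q A) p1" "valid_path (stretch Q A) p2"
    "path_mult (stretch Q A) p1 p2 = Some p" "end_vertex (stretch Q A) p1 = Inl u"
    using path_split[OF tv v u] by blast
  have "Inl u \<in> verts (stretch Q A)" using pverts_valid[OF tv v] u by blast
  then have uv: "u \<in> verts Q" by (simp add: st_verts_Inl)
  have fin: "finite (verts Q)" using fq by (simp add: finite_quiver_def)
  have "pmult (stretch Q A) (pmult (stretch Q A) (sc p1 c) (eps Q)) (sc p2 1) \<in> JJ Q A G"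
    by (rule ideal_gen.gen) (auto intro: sc_carrier p12)
  moreover have e: "pmult (stretch Q A) (sc p1 c) (eps Q) = sc p1 c"
    by (rule pmult_sc_eps[OF fin p12(4) uv])
  moreover have "pmult (stretch Q A) (sc p1 c) (sc p2 1) = sc p c"
    using p12(3) by (simp add: pmult_sc_sc)
  ultimately show ?thesis by simp
qed

lemma gen_vanish:
  fixes G :: "(_ \<Rightarrow> 'k::field) set"
  assumes g: "g \<in> theta A ` G \<union> {eps Q}" and gr: "g r \<noteq> 0"
  shows "pverts (stretch Q A) r \<inter> range Inl \<noteq> {}"
proof (cases "g = eps Q")
  case True
  have "(\<Sum>v\<in>verts Q. vtx (Inl v) r) \<noteq> (0::'k)" using gr True by (simp add: eps_def)
  then obtain v where "v \<in> verts Q" "vtx (Inl v) r \<noteq> (0::'k)"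
    by (rule sum.not_neutral_contains_not_neutral)
  then have "fst r = Inl v" by (auto simp: vtx_def pth_def split: if_splits)
  then show ?thesis by (auto simp: pverts_def)
next
  case False
  then obtain g0 where g0: "g = theta A g0" using g by blast
  have "(\<Sum>p\<in>supp g0. if theta_path A p = r then g0 p else 0) \<noteq> (0::'k)"
    using gr g0 by (simp add: theta_def)
  then obtain p where "p \<in> supp g0" "(if theta_path A p = r then g0 p else 0) \<noteq> 0"
    by (rule sum.not_neutral_contains_not_neutral)
  then have "theta_path A p = r" by (auto split: if_splits)
  then have "fst r \<in> range Inl" by (cases p) auto
  then show ?thesis by (auto simp: pverts_def)
qed

lemma J_vanish:
  fixes x :: "_ \<Rightarrow> 'k::field"
  assumes x: "x \<in> JJ Q A G" and nz: "x r \<noteq> 0"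
  shows "pverts (stretch Q A) r \<inter> range Inl \<noteq> {}"
  by (rule ideal_support[OF _ x nz]) (use gen_vanish in blast)




declare upt_Suc[simp del]

definition bp :: "'e \<Rightarrow> nat \<Rightarrow> nat \<Rightarrow> ('v + 'e \<times> nat, 'e \<times> nat) path" where
  "bp a i n = (Inr (a, i), map (\<lambda>k. (a, k)) [Suc i..<Suc i + n])"

lemma bp_valid:
  assumes a: "a \<in> arrs Q" and i: "1 \<le> i" "i + n \<le> A - 1"
  shows "valid_path (stretch Q A) (bp a i n)"
  unfolding bp_def valid_path.simps
proof (intro conjI allI impI)
  show "Inr (a, i) \<in> verts (stretch Q A)" using a i by (simp add: st_verts_Inr)
  show "set (map (\<lambda>k. (a, k)) [Suc i..<Suc i + n]) \<subseteq> arrs (stretch Q A)"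
    using a i by (auto simp: st_arrs2)
  show "src (stretch Q A) (hd (map (\<lambda>k. (a, k)) [Suc i..<Suc i + n])) = Inr (a, i)"
    if "map (\<lambda>k. (a, k)) [Suc i..<Suc i + n] \<noteq> []"
  proof -
    have n: "0 < n" using that by (simp del: upt_Suc)
    then have "[Suc i..<Suc i + n] = Suc i # [Suc (Suc i)..<Suc i + n]" by (simp add: upt_conv_Cons del: upt_Suc)
    then show ?thesis using i by (simp add: st_src del: upt_Suc)
  qed
  fix m assume m: "Suc m < length (map (\<lambda>k. (a, k)) [Suc i..<Suc i + n])"
  then have "Suc i + m \<noteq> A" using i by simp
  then show "tgt (stretch Q A) (map (\<lambda>k. (a, k)) [Suc i..<Suc i + n] ! m) =
         src (stretch Q A) (map (\<lambda>k. (a, k)) [Suc i..<Suc i + n] ! Suc m)"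
    using m by (simp add: st_src st_tgt)
qed

lemma bp_pverts:
  assumes i: "1 \<le> i" "i + n \<le> A - 1"
  shows "pverts (stretch Q A) (bp a i n) \<subseteq> range (\<lambda>k. Inr (a, k))"
proof -
  have "tgt (stretch Q A) (a, k) \<in> range (\<lambda>k. Inr (a, k))" if "k < Suc i + n" for k
    using that i by (simp add: st_tgt)
  then show ?thesis by (auto simp: pverts_def bp_def)
qed

lemma bp_inj:
  fixes a a' :: 'e
  assumes h: "(bp a i n :: ('v + 'e \<times> nat, 'e \<times> nat) path) = bp a' i' n'"
  shows "a = a' \<and> i = i' \<and> n = n'"
proof -
  have "(Inr (a, i) :: 'v + 'e \<times> nat) = Inr (a', i') \<and> map (\<lambda>k. (a, k)) [Suc i..<Suc i + n] = map (\<lambda>k. (a', k)) [Suc i'..<Suc i' + n']"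
    using h unfolding bp_def by (simp only: prod.inject)
  then have "a = a' \<and> i = i'" "length (map (\<lambda>k. (a, k)) [Suc i..<Suc i + n]) = length (map (\<lambda>k. (a', k)) [Suc i'..<Suc i' + n'])"
    by (blast, metis)
  then show ?thesis by simp
qed

lemma bad_char:
  assumes fq: "finite_quiver Q" and v: "valid_path (stretch Q A) p"
    and ni: "pverts (stretch Q A) p \<inter> range Inl = {}"
  shows "\<exists>a i n. a \<in> arrs Q \<and> 1 \<le> i \<and> i + n \<le> A - 1 \<and> p = bp a i n"
proof -
  obtain w as where p: "p = (w, as)" by (cases p)
  have vw: "w \<in> verts (stretch Q A)" and sa: "set as \<subseteq> arrs (stretch Q A)"
    and hd: "as \<noteq> [] \<longrightarrow> src (stretch Q A) (hd as) = w"
    and ch: "\<forall>i. Suc i < length as \<longrightarrow> tgt (stretch Q A) (as ! i) = src (stretch Q A) (as ! Suc i)"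
    using v p by (auto simp: valid_path.simps)
  have "w \<notin> range Inl" using ni p by (auto simp: pverts_def)
  then obtain a i where w: "w = Inr (a, i)" and a: "a \<in> arrs Q" and i: "1 \<le> i" "i \<le> A - 1"
    using vw by (auto simp: stretch_def)
  have tn: "tgt (stretch Q A) (as ! m) \<notin> range Inl" if "m < length as" for m
  proof -
    have "tgt (stretch Q A) (as ! m) \<in> pverts (stretch Q A) p"
      using that p by (auto simp: pverts_def)
    then show ?thesis using ni by blast
  qed
  have arr: "\<exists>b j. as ! m = (b, j) \<and> b \<in> arrs Q \<and> 1 \<le> j \<and> j \<le> A" if "m < length as" for m
  proof -
    have "as ! m \<in> arrs (stretch Q A)" using nth_mem[OF that] sa by blast
    then show ?thesis by (simp add: st_arrs)
  qed
  have key: "m < length as \<longrightarrow> as ! m = (a, Suc i + m)" for m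
  proof (induction m)
    case 0
    show ?case
    proof
      assume l: "0 < length as"
      then obtain b j where bj: "as ! 0 = (b, j)" by (metis arr)
      have "src (stretch Q A) (as ! 0) = Inr (a, i)" using hd l w by (simp add: hd_conv_nth)
      then have "j \<noteq> 1 \<and> b = a \<and> j - 1 = i" using bj by (auto simp: st_src split: if_splits)
      then show "as ! 0 = (a, Suc i + 0)" using bj i by auto
    qed
  next
    case (Suc m)
    show ?case
    proof
      assume l: "Suc m < length as"
      then have IH: "as ! m = (a, Suc i + m)" using Suc by simp
      obtain b j where bj: "as ! Suc m = (b, j)" by (metis arr l)
      have "tgt (stretch Q A) (as ! m) \<notin> range Inl" using tn l by simp
      then have t: "tgt (stretch Q A) (as ! m) = Inr (a, Suc i + m)" using IH by (auto simp: st_tgt split: if_splits)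
      have "src (stretch Q A) (as ! Suc m) = Inr (a, Suc i + m)" using ch l t by simp
      then have "j \<noteq> 1 \<and> b = a \<and> j - 1 = Suc i + m" using bj by (auto simp: st_src split: if_splits)
      then show "as ! Suc m = (a, Suc i + Suc m)" using bj by auto
    qed
  qed
  define n where "n = length as"
  have bound: "i + n \<le> A - 1"
  proof (cases "n = 0")
    case True then show ?thesis using i by simp
  next
    case False
    then have l: "n - 1 < length as" by (simp add: n_def)
    then have e: "as ! (n - 1) = (a, i + n)" using key False by simp
    then have "i + n \<le> A" using arr[OF l] by auto
    moreover have "i + n \<noteq> A" using tn[OF l] e by (auto simp: st_tgt)
    ultimately show ?thesis by simp
  qed
  have "as = map (\<lambda>k. (a, k)) [Suc i..<Suc i + n]"
    by (rule nth_equalityI) (auto simp: n_def key)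
  then have "p = bp a i n" using p w by (simp add: bp_def)
  then show ?thesis using a i bound by blast
qed

definition TT :: "nat \<Rightarrow> (nat \<times> nat) set" where
  "TT N = {(i, n). 1 \<le> i \<and> i + n \<le> N}"

lemma TT_fin: "finite (TT N)"
proof -
  have "TT N \<subseteq> {..N} \<times> {..N}" by (auto simp: TT_def)
  then show ?thesis by (rule finite_subset) simp
qed

lemma TT_card: "2 * card (TT N) = N * Suc N"
proof (induction N)
  case 0
  have "TT 0 = {}" by (auto simp: TT_def)
  then show ?case by simp
next
  case (Suc N)
  have e: "TT (Suc N) = TT N \<union> (\<lambda>i. (i, Suc N - i)) ` {1..Suc N}"
    by (auto simp: TT_def image_iff)
  have d: "TT N \<inter> (\<lambda>i. (i, Suc N - i)) ` {1..Suc N} = {}"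
    by (auto simp: TT_def)
  have "card ((\<lambda>i. (i, Suc N - i)) ` {1..Suc N}) = Suc N"
    by (subst card_image) (auto simp: inj_on_def)
  then have "card (TT (Suc N)) = card (TT N) + Suc N"
    unfolding e using d TT_fin by (simp add: card_Un_disjoint)
  then show ?case using Suc by simp
qed

lemma lc_nth:
  assumes d: "distinct ps" and k: "k < length ps"
  shows "lin_comb c (map pth ps) (ps ! k) = (c k :: 'k::comm_ring_1)"
proof -
  have "lin_comb c (map pth ps) (ps ! k) = (\<Sum>i<length ps. if i = k then c i else 0)"
    unfolding lin_comb_def
    by (rule sum.cong) (auto simp: pth_def nth_eq_iff_index_eq[OF d] k)
  also have "\<dots> = c k" using k by simp
  finally show ?thesis .
qed

lemma lc_out:
  assumes "r \<notin> set ps"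
  shows "lin_comb c (map pth ps) r = (0 :: 'k::comm_ring_1)"
  unfolding lin_comb_def using assms
  by (intro sum.neutral) (auto simp: pth_def)

lemma lc_zero: "lin_comb (\<lambda>_. 0) xs = (\<lambda>_. (0 :: 'k::comm_ring_1))"
  by (auto simp: lin_comb_def)

lemma lc_add: "lin_comb (\<lambda>i. c i + d i) xs r = lin_comb c xs r + lin_comb d xs (r :: 'p) + (0 :: 'k::comm_ring_1)"
  by (simp add: lin_comb_def sum.distrib distrib_right)




lemma span_lemma:
  fixes x :: "('v + 'e \<times> nat, 'e \<times> nat) path \<Rightarrow> 'k::field"
    and G :: "(('v, 'e) path \<Rightarrow> 'k) set"
  assumes fq: "finite_quiver Q" and d: "distinct ps"
    and psb: "\<forall>p\<in>set ps. pverts (stretch Q A) p \<inter> range Inl = {}"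
    and x: "x \<in> pa_carrier (stretch Q A)"
    and xv: "\<And>r. valid_path (stretch Q A) r \<Longrightarrow> pverts (stretch Q A) r \<inter> range Inl = {} \<Longrightarrow> r \<notin> set ps \<Longrightarrow> x r = 0"
  shows "(\<lambda>r. x r - lin_comb (\<lambda>i. x (ps ! i)) (map pth ps) r) \<in> JJ Q A G"
proof (rule ideal_from_sc[where P = "\<lambda>r. valid_path (stretch Q A) r \<and> pverts (stretch Q A) r \<inter> range Inl \<noteq> {}"])
  show "(\<lambda>_. 0) \<in> JJ Q A G" by (rule ideal_gen.zero)
  show "padd y z \<in> JJ Q A G" if "y \<in> JJ Q A G" "z \<in> JJ Q A G" for y z
    using that by (rule ideal_gen.add)
  show "sc p c \<in> JJ Q A G" if "valid_path (stretch Q A) p \<and> pverts (stretch Q A) p \<inter> range Inl \<noteq> {}" for p c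
    using that sc_in_J[OF fq] by blast
  have fx: "finite (supp x)" using x by (simp add: pa_carrier_def)
  have "supp (\<lambda>r. x r - lin_comb (\<lambda>i. x (ps ! i)) (map pth ps) r) \<subseteq> supp x \<union> set ps"
    by (auto simp: supp_def lc_out)
  then show "finite (supp (\<lambda>r. x r - lin_comb (\<lambda>i. x (ps ! i)) (map pth ps) r))"
    using fx by (meson finite_Un finite_set finite_subset)
  fix r assume nz: "x r - lin_comb (\<lambda>i. x (ps ! i)) (map pth ps) r \<noteq> 0"
  show "valid_path (stretch Q A) r \<and> pverts (stretch Q A) r \<inter> range Inl \<noteq> {}"
  proof (cases "r \<in> set ps")
    case True
    then obtain k where k: "k < length ps" "r = ps ! k" by (auto simp: in_set_conv_nth)
    then have "lin_comb (\<lambda>i. x (ps ! i)) (map pth ps) r = x r" using lc_nth[OF d] by simp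
    then show ?thesis using nz by simp
  next
    case False
    then have xr: "x r \<noteq> 0" using nz lc_out[OF False, of "\<lambda>i. x (ps ! i)"] by simp
    then have vr: "valid_path (stretch Q A) r" using x unfolding pa_carrier_def by blast
    show ?thesis
    proof (rule conjI[OF vr], rule notI)
      assume "pverts (stretch Q A) r \<inter> range Inl = {}"
      then show False using xv[OF vr _ False] xr by simp
    qed
  qed
qed

lemma indep_lemma:
  fixes c :: "nat \<Rightarrow> 'k::field"
    and G :: "(('v, 'e) path \<Rightarrow> 'k) set"
    and ps :: "('v + 'e \<times> nat, 'e \<times> nat) path list"
  assumes d: "distinct ps"
    and psb: "\<forall>p\<in>set ps. pverts (stretch Q A) p \<inter> range Inl = {}"
    and l: "lin_comb c (map pth ps) \<in> JJ Q A G" and i: "i < length ps"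
  shows "c i = 0"
proof (rule ccontr)
  assume "c i \<noteq> 0"
  then have "lin_comb c (map pth ps) (ps ! i) \<noteq> 0" using lc_nth[OF d i, of c] by simp
  then have "pverts (stretch Q A) (ps ! i) \<inter> range Inl \<noteq> {}" using J_vanish[OF l] by blast
  then show False using psb i nth_mem by blast
qed




lemma U_support:
  fixes G :: "(('v, 'e) path \<Rightarrow> 'k::field) set"
  assumes x: "x \<in> ideal_gen (stretch Q A) (theta A ` G \<union> {eps Q} \<union> {vtx (Inr (\<alpha>, j)) | j. 1 \<le> j \<and> j \<le> A - 1})"
    and nz: "x r \<noteq> 0"
  shows "pverts (stretch Q A) r \<inter> (range Inl \<union> range (\<lambda>k. Inr (\<alpha>, k))) \<noteq> {}"
proof (rule ideal_support[OF _ x nz])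
  show "\<forall>g\<in>theta A ` G \<union> {eps Q} \<union> {vtx (Inr (\<alpha>, j)) | j. 1 \<le> j \<and> j \<le> A - 1}. \<forall>r. g r \<noteq> 0 \<longrightarrow>
      pverts (stretch Q A) r \<inter> (range Inl \<union> range (\<lambda>k. Inr (\<alpha>, k))) \<noteq> {}"
  proof (intro ballI allI impI)
    fix g r assume g: "g \<in> theta A ` G \<union> {eps Q} \<union> {vtx (Inr (\<alpha>, j)) | j. 1 \<le> j \<and> j \<le> A - 1}"
      and gr: "g r \<noteq> 0"
    show "pverts (stretch Q A) r \<inter> (range Inl \<union> range (\<lambda>k. Inr (\<alpha>, k))) \<noteq> {}"
    proof (cases "g \<in> theta A ` G \<union> {eps Q}")
      case True
      then show ?thesis using gen_vanish[OF True gr] by blast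
    next
      case False
      then obtain j where "g = vtx (Inr (\<alpha>, j))" using g by blast
      then have "fst r = Inr (\<alpha>, j)" using gr by (auto simp: vtx_def pth_def split: if_splits)
      then show ?thesis by (auto simp: pverts_def)
    qed
  qed
qed




theorem proposition2p3:
  fixes Q :: "('v, 'e) quiver"
    and G :: "(('v, 'e) path \<Rightarrow> 'k::field) set"
    and I :: "(('v, 'e) path \<Rightarrow> 'k) set"
    and A :: nat
  assumes fq: "finite_quiver Q"
    and G_car: "G \<subseteq> pa_carrier Q"
    and G_fin: "finite G"
    and G_unif: "\<forall>g\<in>G. uniform Q g"
    and I_gen: "I = ideal_gen Q G"
    and G_min: "\<forall>G'. G' \<subset> G \<longrightarrow> ideal_gen Q G' \<noteq> I"
    and adm: "admissible Q I"
    and fd: "\<exists>d. has_qdim (pa_carrier Q) I d"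
    and A: "A \<ge> 1"
  shows "(\<forall>\<alpha>\<in>arrs Q.
           has_qdim
             (ideal_gen (stretch Q A)
                (theta A ` G \<union> {eps Q} \<union> {vtx (Inr (\<alpha>, j)) | j. 1 \<le> j \<and> j \<le> A - 1}))
             (ideal_gen (stretch Q A) (theta A ` G \<union> {eps Q}))
             (A * (A - 1) div 2))
       \<and> has_qdim (pa_carrier (stretch Q A))
             (ideal_gen (stretch Q A) (theta A ` G \<union> {eps Q}))
             (card (arrs Q) * A * (A - 1) div 2)"
proof -
  define T where "T = TT (A - 1)"
  have finT: "finite T" by (simp add: T_def TT_fin)
  have c2: "2 * card T = A * (A - 1)" using TT_card[of "A - 1"] A by (simp add: T_def)
  have cardT: "card T = A * (A - 1) div 2" using c2 by simp
  have finA: "finite (arrs Q)" using fq by (simp add: finite_quiver_def)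
  have Tmem: "1 \<le> i \<and> i + n \<le> A - 1" if "(i, n) \<in> T" for i n
    using that by (simp add: T_def TT_def)
  have pth_car: "pth p \<in> pa_carrier (stretch Q A)" if "valid_path (stretch Q A) p" for p
    using sc_carrier[OF that] by (simp add: pth_sc)
  have bp_noInl: "pverts (stretch Q A) (bp a i n) \<inter> range Inl = {}" if "(i, n) \<in> T" for a i n
    using bp_pverts[of i n A Q a] Tmem[OF that] by blast
  define B :: "('v + 'e \<times> nat, 'e \<times> nat) path set" where
    "B = (\<lambda>(a, i, n). bp a i n) ` (arrs Q \<times> T)"
  have injB: "inj_on (\<lambda>(a, i, n). (bp a i n :: ('v + 'e \<times> nat, 'e \<times> nat) path)) (arrs Q \<times> T)"
    by (auto simp: inj_on_def dest: bp_inj)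
  have finB: "finite B" using finA finT by (simp add: B_def)
  obtain ps where ps: "set ps = B" "distinct ps" using finite_distinct_list[OF finB] by blast
  have lenps: "length ps = card (arrs Q) * card T"
    using ps distinct_card[OF ps(2)] card_image[OF injB] by (simp add: B_def card_cartesian_product)
  have psb: "\<forall>p\<in>set ps. pverts (stretch Q A) p \<inter> range Inl = {}"
  proof
    fix p assume "p \<in> set ps"
    then obtain a i n where "(i, n) \<in> T" "p = bp a i n" using ps(1) by (auto simp: B_def)
    then show "pverts (stretch Q A) p \<inter> range Inl = {}" using bp_noInl by simp
  qed
  have psv: "\<forall>p\<in>set ps. valid_path (stretch Q A) p"
  proof
    fix p assume "p \<in> set ps"
    then obtain a i n where "a \<in> arrs Q" "(i, n) \<in> T" "p = bp a i n" using ps(1) by (auto simp: B_def)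
    then show "valid_path (stretch Q A) p" using bp_valid[of a Q i n A] Tmem by simp
  qed
  have eq: "card (arrs Q) * A * (A - 1) = 2 * (card (arrs Q) * card T)" using c2
    by (simp add: mult.assoc mult.left_commute)
  have eq2: "card (arrs Q) * A * (A - 1) div 2 = card (arrs Q) * card T" unfolding eq by simp
  have L2: "length (map pth ps) = card (arrs Q) * A * (A - 1) div 2" using lenps eq2 by simp
  have S2: "set (map pth ps) \<subseteq> pa_carrier (stretch Q A)" using psv pth_car by auto
  have I2: "\<forall>c. lin_comb c (map pth ps) \<in> JJ Q A G \<longrightarrow> (\<forall>i<card (arrs Q) * A * (A - 1) div 2. c i = 0)"
  proof (intro allI impI)
    fix c i assume l: "lin_comb c (map pth ps) \<in> JJ Q A G" and i: "i < card (arrs Q) * A * (A - 1) div 2"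
    have "i < length ps" using i lenps eq2 by simp
    then show "c i = 0" using indep_lemma[OF ps(2) psb l] by blast
  qed
  have P2: "\<forall>u\<in>pa_carrier (stretch Q A). \<exists>c w. w \<in> JJ Q A G \<and> u = padd (lin_comb c (map pth ps)) w"
  proof
    fix u :: "('v + 'e \<times> nat, 'e \<times> nat) path \<Rightarrow> 'k"
    assume u: "u \<in> pa_carrier (stretch Q A)"
    define w where "w = (\<lambda>r. u r - lin_comb (\<lambda>i. u (ps ! i)) (map pth ps) r)"
    have "w \<in> JJ Q A G" unfolding w_def
    proof (rule span_lemma[OF fq ps(2) psb u])
      fix r assume vr: "valid_path (stretch Q A) r" and nr: "pverts (stretch Q A) r \<inter> range Inl = {}"
        and rn: "r \<notin> set ps"
      obtain a i n where ain: "a \<in> arrs Q" "1 \<le> i" "i + n \<le> A - 1" "r = bp a i n"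
        using bad_char[OF fq vr nr] by blast
      have "r \<in> B" unfolding B_def
        by (rule image_eqI[where x="(a, i, n)"]) (use ain in \<open>auto simp: T_def TT_def\<close>)
      then show "u r = 0" using rn ps(1) by simp
    qed
    moreover have "u = padd (lin_comb (\<lambda>i. u (ps ! i)) (map pth ps)) w"
      by (auto simp: padd_def w_def)
    ultimately show "\<exists>c w. w \<in> JJ Q A G \<and> u = padd (lin_comb c (map pth ps)) w" by blast
  qed
  have part2: "has_qdim (pa_carrier (stretch Q A)) (JJ Q A G) (card (arrs Q) * A * (A - 1) div 2)"
    unfolding has_qdim_def using L2 S2 I2 P2 by blast
  have part1: "has_qdim
             (ideal_gen (stretch Q A)
                (theta A ` G \<union> {eps Q} \<union> {vtx (Inr (\<alpha>, j)) | j. 1 \<le> j \<and> j \<le> A - 1}))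
             (JJ Q A G) (A * (A - 1) div 2)" if al: "\<alpha> \<in> arrs Q" for \<alpha>
  proof -
    let ?U = "ideal_gen (stretch Q A)
                (theta A ` G \<union> {eps Q} \<union> {vtx (Inr (\<alpha>, j)) | j. 1 \<le> j \<and> j \<le> A - 1})"
    define Ba :: "('v + 'e \<times> nat, 'e \<times> nat) path set" where
      "Ba = (\<lambda>(i, n). bp \<alpha> i n) ` T"
    have injBa: "inj_on (\<lambda>(i, n). (bp \<alpha> i n :: ('v + 'e \<times> nat, 'e \<times> nat) path)) T"
      by (auto simp: inj_on_def dest: bp_inj)
    have finBa: "finite Ba" using finT by (simp add: Ba_def)
    obtain qs where qs: "set qs = Ba" "distinct qs" using finite_distinct_list[OF finBa] by blast
    have lenqs: "length qs = card T"
      using qs distinct_card[OF qs(2)] card_image[OF injBa] by (simp add: Ba_def)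
    have qsb: "\<forall>p\<in>set qs. pverts (stretch Q A) p \<inter> range Inl = {}"
    proof
      fix p assume "p \<in> set qs"
      then obtain i n where "(i, n) \<in> T" "p = bp \<alpha> i n" using qs(1) by (auto simp: Ba_def)
      then show "pverts (stretch Q A) p \<inter> range Inl = {}" using bp_noInl by simp
    qed
    have L1: "length (map pth qs) = A * (A - 1) div 2" using lenqs cardT by simp
    have S1: "set (map pth qs) \<subseteq> ?U"
    proof
      fix y :: "('v + 'e \<times> nat, 'e \<times> nat) path \<Rightarrow> 'k" assume "y \<in> set (map pth qs)"
      then obtain p where p: "p \<in> set qs" "y = pth p" by auto
      then obtain i n where inT: "(i, n) \<in> T" and pe: "p = bp \<alpha> i n" using qs(1) by (auto simp: Ba_def)
      have i: "1 \<le> i" "i + n \<le> A - 1" using Tmem[OF inT] by auto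
      have vp: "valid_path (stretch Q A) p" using bp_valid[OF al i] pe by simp
      have vv: "valid_path (stretch Q A) (Inr (\<alpha>, i), [])"
        using al i by (simp add: valid_path.simps st_verts_Inr)
      have gen: "vtx (Inr (\<alpha>, i)) \<in> theta A ` G \<union> {eps Q} \<union> {vtx (Inr (\<alpha>, j)) | j. 1 \<le> j \<and> j \<le> A - 1}"
        using i by auto
      have "pmult (stretch Q A) (pmult (stretch Q A) (vtx (Inr (\<alpha>, i))) (vtx (Inr (\<alpha>, i)))) (pth p) \<in> ?U"
        by (rule ideal_gen.gen[OF gen]) (use sc_carrier[OF vv] pth_car[OF vp] in \<open>simp_all add: vtx_sc\<close>)
      moreover have "pmult (stretch Q A) (pmult (stretch Q A) (vtx (Inr (\<alpha>, i))) (vtx (Inr (\<alpha>, i)))) (pth p) = (pth p :: _ \<Rightarrow> 'k)"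
        unfolding vtx_sc pth_sc pe by (simp add: pmult_sc_sc bp_def)
      ultimately show "y \<in> ?U" using p by simp
    qed
    have I1: "\<forall>c. lin_comb c (map pth qs) \<in> JJ Q A G \<longrightarrow> (\<forall>i<A * (A - 1) div 2. c i = 0)"
    proof (intro allI impI)
      fix c i assume l: "lin_comb c (map pth qs) \<in> JJ Q A G" and i: "i < A * (A - 1) div 2"
      have "i < length qs" using i lenqs cardT by simp
      then show "c i = 0" using indep_lemma[OF qs(2) qsb l] by blast
    qed
    have R: "(\<lambda>r. u r - lin_comb (\<lambda>i. u (qs ! i)) (map pth qs) r) \<in> JJ Q A G" if uU: "u \<in> ?U" for u :: "('v + 'e \<times> nat, 'e \<times> nat) path \<Rightarrow> 'k"
      using uU
    proof (induction u rule: ideal_gen.induct)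
      case zero
      show ?case using ideal_gen.zero by (simp add: lc_zero)
    next
      case (gen g a b)
      let ?x = "pmult (stretch Q A) (pmult (stretch Q A) a g) b"
      show ?case
      proof (cases "g \<in> theta A ` G \<union> {eps Q}")
        case True
        have xJ: "?x \<in> JJ Q A G" by (rule ideal_gen.gen[OF True gen(2) gen(3)])
        have z: "?x (qs ! i) = 0" if "i < length qs" for i
        proof (rule ccontr)
          assume "?x (qs ! i) \<noteq> 0"
          then have "pverts (stretch Q A) (qs ! i) \<inter> range Inl \<noteq> {}" using J_vanish[OF xJ] by blast
          then show False using qsb that nth_mem by blast
        qed
        have "lin_comb (\<lambda>i. ?x (qs ! i)) (map pth qs) r = 0" for r
          unfolding lin_comb_def by (rule sum.neutral) (simp add: z)
        then show ?thesis using xJ by simp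
      next
        case False
        then obtain j where j: "g = vtx (Inr (\<alpha>, j))" "1 \<le> j" "j \<le> A - 1" using gen(1) by blast
        have vv: "valid_path (stretch Q A) (Inr (\<alpha>, j), [])"
          using al j by (simp add: valid_path.simps st_verts_Inr)
        have gc: "g \<in> pa_carrier (stretch Q A)" using sc_carrier[OF vv] j by (simp add: vtx_sc)
        have xc: "?x \<in> pa_carrier (stretch Q A)"
          by (intro pmult_carrier gen(2) gen(3) gc)
        have xU: "?x \<in> ?U" by (rule ideal_gen.gen[OF gen(1) gen(2) gen(3)])
        show ?thesis
        proof (rule span_lemma[OF fq qs(2) qsb xc])
          fix r assume vr: "valid_path (stretch Q A) r" and nr: "pverts (stretch Q A) r \<inter> range Inl = {}"
            and rn: "r \<notin> set qs"
          show "?x r = 0"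
          proof (rule ccontr)
            assume "?x r \<noteq> 0"
            then have "pverts (stretch Q A) r \<inter> (range Inl \<union> range (\<lambda>k. Inr (\<alpha>, k))) \<noteq> {}"
              using U_support[OF xU] by blast
            then obtain k where k: "Inr (\<alpha>, k) \<in> pverts (stretch Q A) r" using nr by blast
            obtain b i n where bin: "b \<in> arrs Q" "1 \<le> i" "i + n \<le> A - 1" "r = bp b i n"
              using bad_char[OF fq vr nr] by blast
            have "pverts (stretch Q A) r \<subseteq> range (\<lambda>k. Inr (b, k))"
              using bp_pverts[OF bin(2) bin(3)] bin(4) by simp
            then have "b = \<alpha>" using k by auto
            then have "r \<in> Ba" unfolding Ba_def
              by (intro image_eqI[where x="(i, n)"]) (use bin in \<open>auto simp: T_def TT_def\<close>)
            then show False using rn qs(1) by simp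
          qed
        qed
      qed
    next
      case (add x y)
      have "(\<lambda>r. padd x y r - lin_comb (\<lambda>i. padd x y (qs ! i)) (map pth qs) r) =
            padd (\<lambda>r. x r - lin_comb (\<lambda>i. x (qs ! i)) (map pth qs) r)
                 (\<lambda>r. y r - lin_comb (\<lambda>i. y (qs ! i)) (map pth qs) r)"
        by (rule ext) (simp add: padd_def lin_comb_def sum.distrib distrib_right)
      then show ?case using ideal_gen.add[OF add.IH] by simp
    qed
    have P1: "\<forall>u\<in>?U. \<exists>c w. w \<in> JJ Q A G \<and> u = padd (lin_comb c (map pth qs)) w"
    proof
      fix u :: "('v + 'e \<times> nat, 'e \<times> nat) path \<Rightarrow> 'k" assume u: "u \<in> ?U"
      have "u = padd (lin_comb (\<lambda>i. u (qs ! i)) (map pth qs)) (\<lambda>r. u r - lin_comb (\<lambda>i. u (qs ! i)) (map pth qs) r)"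
        by (auto simp: padd_def)
      then show "\<exists>c w. w \<in> JJ Q A G \<and> u = padd (lin_comb c (map pth qs)) w" using R[OF u] by blast
    qed
    show ?thesis unfolding has_qdim_def using L1 S1 I1 P1 by blast
  qed
  show ?thesis using part1 part2 by blast
qed


end
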